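(* Let $\mathcal{R}^{rsc}$ be a rich single-crossing domain and $F:\mathcal{R}^{rsc}\to\mathbb{Z}$ a strategy-proof mechanism. Then $F$ is monotone: for all $R',R''\in\mathcal{R}^{rsc}$ with $R'\prec R''$, $F(R')\le F(R'')$ (i.e. either $F(R')=F(R'')$ or both coordinates of $F(R')$ are strictly smaller than those of $F(R'')$). The same holds for mechanisms defined on a closed interval $[\underline R,\overline R]\subseteq\mathcal{R}^{rsc}$.
   Context: $\mathbb{Z}=[0,\infty)\times[0,1]$; $(t',q')<(t'',q'')$ means $t'<t''$ and $q'<q''$, and $x\le y$ means $x=y$ or $x<y$; $\square(z)=\{x:x\le z\}$. A classical preference is a complete transitive relation $R$ on $\mathbb{Z}$ (strict part $P$, indifference $I$) strictly decreasing in $t$ for fixed $q$, strictly increasing in $q$ for fixed $t$, with closed upper and lower contour sets $UC(R,z)=\{x:xRz\}$, $LC(R,z)=\{x:zRx\}$. Distinct classical preferences satisfy single-crossing if any indifference set of one meets any indifference set of the other in at most one point. A rich single-crossing domain $\mathcal{R}^{rsc}$ is a set of pairwise single-crossing classical preferences such that for all $x'<x''$ some member is indifferent between $x'$ and $x''$. For distinct members, $R'\prec R''$ means $\square(z)\cap UC(R'',z)\subseteq\square(z)\cap UC(R',z)$ for all $z\in\mathbb{Z}$; $\prec$ is a linear order. A mechanism is a map $F$ from the domain to $\mathbb{Z}$; it is strategy-proof if $F(R')\,R'\,F(R'')$ for all $R',R''$ in the domain. *)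

theory Defs
  imports "HOL-Analysis.Analysis"
begin

type_synonym alloc = "real \<times> real"
type_synonym pref = "alloc rel"

definition ZZ :: "alloc set" where
  "ZZ = {(t, q). 0 \<le> t \<and> 0 \<le> q \<and> q \<le> 1}"

definition zlt :: "alloc \<Rightarrow> alloc \<Rightarrow> bool" where
  "zlt x y \<longleftrightarrow> fst x < fst y \<and> snd x < snd y"

definition zle :: "alloc \<Rightarrow> alloc \<Rightarrow> bool" where
  "zle x y \<longleftrightarrow> x = y \<or> zlt x y"

definition box :: "alloc \<Rightarrow> alloc set" where
  "box z = {x \<in> ZZ. zle x z}"

definition UC :: "pref \<Rightarrow> alloc \<Rightarrow> alloc set" where
  "UC R z = {x \<in> ZZ. (x, z) \<in> R}"

definition LC :: "pref \<Rightarrow> alloc \<Rightarrow> alloc set" where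
  "LC R z = {x \<in> ZZ. (z, x) \<in> R}"

definition strict :: "pref \<Rightarrow> alloc \<Rightarrow> alloc \<Rightarrow> bool" where
  "strict R x y \<longleftrightarrow> (x, y) \<in> R \<and> (y, x) \<notin> R"

definition indiff :: "pref \<Rightarrow> alloc \<Rightarrow> alloc \<Rightarrow> bool" where
  "indiff R x y \<longleftrightarrow> (x, y) \<in> R \<and> (y, x) \<in> R"

definition indiff_set :: "pref \<Rightarrow> alloc \<Rightarrow> alloc set" where
  "indiff_set R z = {x \<in> ZZ. indiff R x z}"

definition classical :: "pref \<Rightarrow> bool" where
  "classical R \<longleftrightarrow>
     R \<subseteq> ZZ \<times> ZZ \<and>
     (\<forall>x\<in>ZZ. \<forall>y\<in>ZZ. (x, y) \<in> R \<or> (y, x) \<in> R) \<and>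
     trans R \<and>
     (\<forall>t1 t2 q. (t1, q) \<in> ZZ \<and> (t2, q) \<in> ZZ \<and> t1 < t2 \<longrightarrow> strict R (t1, q) (t2, q)) \<and>
     (\<forall>t q1 q2. (t, q1) \<in> ZZ \<and> (t, q2) \<in> ZZ \<and> q1 < q2 \<longrightarrow> strict R (t, q2) (t, q1)) \<and>
     (\<forall>z\<in>ZZ. closed (UC R z) \<and> closed (LC R z))"

definition single_crossing :: "pref \<Rightarrow> pref \<Rightarrow> bool" where
  "single_crossing R1 R2 \<longleftrightarrow>
     (\<forall>z1\<in>ZZ. \<forall>z2\<in>ZZ. \<forall>x y. x \<in> indiff_set R1 z1 \<inter> indiff_set R2 z2 \<longrightarrow>
        y \<in> indiff_set R1 z1 \<inter> indiff_set R2 z2 \<longrightarrow> x = y)"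

definition rich_single_crossing :: "pref set \<Rightarrow> bool" where
  "rich_single_crossing D \<longleftrightarrow>
     (\<forall>R\<in>D. classical R) \<and>
     (\<forall>R1\<in>D. \<forall>R2\<in>D. R1 \<noteq> R2 \<longrightarrow> single_crossing R1 R2) \<and>
     (\<forall>x1\<in>ZZ. \<forall>x2\<in>ZZ. zlt x1 x2 \<longrightarrow> (\<exists>R\<in>D. indiff R x1 x2))"

definition pref_less :: "pref \<Rightarrow> pref \<Rightarrow> bool" where
  "pref_less R1 R2 \<longleftrightarrow> R1 \<noteq> R2 \<and>
     (\<forall>z\<in>ZZ. box z \<inter> UC R2 z \<subseteq> box z \<inter> UC R1 z)"

definition pref_interval :: "pref set \<Rightarrow> pref \<Rightarrow> pref \<Rightarrow> pref set" where
  "pref_interval D Rlo Rhi =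
     {R \<in> D. (R = Rlo \<or> pref_less Rlo R) \<and> (R = Rhi \<or> pref_less R Rhi)}"

definition mechanism :: "pref set \<Rightarrow> (pref \<Rightarrow> alloc) \<Rightarrow> bool" where
  "mechanism D F \<longleftrightarrow> (\<forall>R\<in>D. F R \<in> ZZ)"

definition strategy_proof :: "pref set \<Rightarrow> (pref \<Rightarrow> alloc) \<Rightarrow> bool" where
  "strategy_proof D F \<longleftrightarrow> (\<forall>R1\<in>D. \<forall>R2\<in>D. (F R1, F R2) \<in> R1)"

definition monotone_mech :: "pref set \<Rightarrow> (pref \<Rightarrow> alloc) \<Rightarrow> bool" where
  "monotone_mech D F \<longleftrightarrow>
     (\<forall>R1\<in>D. \<forall>R2\<in>D. pref_less R1 R2 \<longrightarrow> zle (F R1) (F R2))"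

end

theory Submission
  imports Defs
begin

lemma dom_lemma:
  assumes c: "classical R" and a: "a \<in> ZZ" and b: "b \<in> ZZ"
    and le: "fst a \<le> fst b" "snd b \<le> snd a" and ne: "a \<noteq> b"
  shows "(b, a) \<notin> R"
proof
  assume ba: "(b, a) \<in> R"
  obtain ta qa where A: "a = (ta, qa)" by (cases a)
  obtain tb qb where B: "b = (tb, qb)" by (cases b)
  have zz: "(ta, qb) \<in> ZZ" using a b A B by (auto simp: ZZ_def)
  have tr: "trans R" using c by (simp add: classical_def)
  have tm: "\<And>t1 t2 q. (t1, q) \<in> ZZ \<Longrightarrow> (t2, q) \<in> ZZ \<Longrightarrow> t1 < t2 \<Longrightarrow> strict R (t1, q) (t2, q)"
    using c by (simp add: classical_def)
  have qm: "\<And>t q1 q2. (t, q1) \<in> ZZ \<Longrightarrow> (t, q2) \<in> ZZ \<Longrightarrow> q1 < q2 \<Longrightarrow> strict R (t, q2) (t, q1)"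
    using c by (simp add: classical_def)
  have refl: "\<And>x. x \<in> ZZ \<Longrightarrow> (x, x) \<in> R" using c by (auto simp: classical_def)
  show False
  proof (cases "qb < qa")
    case True
    have s: "strict R (ta, qa) (ta, qb)" using qm[OF zz] a A True by auto
    have "((ta, qb), b) \<in> R"
    proof (cases "ta < tb")
      case True thus ?thesis using tm[OF zz] b B by (auto simp: strict_def)
    next
      case False thus ?thesis using le A B refl b by auto
    qed
    hence "((ta, qb), a) \<in> R" using ba tr by (meson transD)
    thus False using s A by (simp add: strict_def)
  next
    case False
    hence "qa = qb" using le A B by auto
    hence "ta < tb" using le ne A B by auto
    hence "strict R a b" using tm a b A B \<open>qa = qb\<close> by auto
    thus False using ba by (simp add: strict_def)
  qed
qed

lemma mono_core:
  assumes c1: "classical R1" and c2: "classical R2" and sc: "single_crossing R1 R2"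
    and pl: "pref_less R1 R2" and x: "x \<in> ZZ" and y: "y \<in> ZZ"
    and xy: "(x, y) \<in> R1" and yx: "(y, x) \<in> R2"
  shows "zle x y"
proof (rule ccontr)
  assume nz: "\<not> zle x y"
  obtain tx qx where X: "x = (tx, qx)" by (cases x)
  obtain ty qy where Y: "y = (ty, qy)" by (cases y)
  have ne: "x \<noteq> y" using nz by (auto simp: zle_def)
  have lt: "ty < tx \<and> qy < qx"
  proof (rule ccontr)
    assume h: "\<not> (ty < tx \<and> qy < qx)"
    have "\<not> (tx < ty \<and> qx < qy)" using nz X Y by (auto simp: zle_def zlt_def)
    with h have "(tx \<le> ty \<and> qy \<le> qx) \<or> (ty \<le> tx \<and> qx \<le> qy)" by linarith
    thus False
    proof
      assume "tx \<le> ty \<and> qy \<le> qx"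
      thus False using dom_lemma[OF c2 x y] X Y ne yx by auto
    next
      assume "ty \<le> tx \<and> qx \<le> qy"
      thus False using dom_lemma[OF c1 y x] X Y ne xy by auto
    qed
  qed
  have yb: "y \<in> box x" using y lt X Y by (auto simp: box_def zle_def zlt_def)
  have inc: "box x \<inter> UC R2 x \<subseteq> box x \<inter> UC R1 x" using pl x by (simp add: pref_less_def)
  have tot1: "\<forall>a\<in>ZZ. \<forall>b\<in>ZZ. (a, b) \<in> R1 \<or> (b, a) \<in> R1" using c1 by (simp add: classical_def)
  have tot2: "\<forall>a\<in>ZZ. \<forall>b\<in>ZZ. (a, b) \<in> R2 \<or> (b, a) \<in> R2" using c2 by (simp add: classical_def)
  have tr1: "trans R1" using c1 by (simp add: classical_def)
  show False
  proof (cases "(x, y) \<in> R2")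
    case True
    have "(y, x) \<in> R1" using inc yb yx y by (auto simp: UC_def)
    have "(x, x) \<in> R1" "(x, x) \<in> R2" using tot1 tot2 x by auto
    have "x \<in> indiff_set R1 x \<inter> indiff_set R2 x" using \<open>(x,x) \<in> R1\<close> \<open>(x,x) \<in> R2\<close> x
      by (simp add: indiff_set_def indiff_def)
    moreover have "y \<in> indiff_set R1 x \<inter> indiff_set R2 x" using \<open>(y,x) \<in> R1\<close> xy True yx y
      by (simp add: indiff_set_def indiff_def)
    ultimately show False using sc x ne unfolding single_crossing_def by blast
  next
    case False
    have cl: "closed (LC R2 x)" using c2 x by (simp add: classical_def)
    have "y \<notin> LC R2 x" using False by (simp add: LC_def)
    then obtain e where e: "e > 0" "\<forall>z. dist z y < e \<longrightarrow> z \<notin> LC R2 x"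
      using cl unfolding closed_def open_dist by (metis Compl_iff dist_commute)
    define d where "d = min (e/2) ((tx - ty)/2)"
    have d: "d > 0" "d < e" "ty + d < tx" using e(1) lt unfolding d_def min_def by (auto simp: field_simps)
    define y' where "y' = (ty + d, qy)"
    have y'Z: "y' \<in> ZZ" using y Y d by (auto simp: ZZ_def y'_def)
    have "dist y' y = d" using d Y by (simp add: y'_def dist_Pair_Pair dist_real_def)
    hence "y' \<notin> LC R2 x" using e d by (metis surj_pair)
    hence "(x, y') \<notin> R2" using y'Z by (simp add: LC_def)
    hence "(y', x) \<in> R2" using tot2 x y'Z by auto
    moreover have "y' \<in> box x" using y'Z d lt X by (auto simp: box_def zle_def zlt_def y'_def)
    ultimately have "(y', x) \<in> R1" using inc y'Z by (auto simp: UC_def)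
    hence "(y', y) \<in> R1" using xy tr1 by (meson transD)
    moreover have "strict R1 y y'" using c1 y y'Z d Y unfolding classical_def y'_def by auto
    ultimately show False by (simp add: strict_def)
  qed
qed

lemma sub_mono:
  assumes r: "rich_single_crossing D" and sub: "D' \<subseteq> D"
    and m: "mechanism D' F" and s: "strategy_proof D' F"
  shows "monotone_mech D' F"
  unfolding monotone_mech_def
proof (intro ballI impI)
  fix R1 R2 assume R1: "R1 \<in> D'" and R2: "R2 \<in> D'" and pl: "pref_less R1 R2"
  have c: "classical R1" "classical R2" using r sub R1 R2 by (auto simp: rich_single_crossing_def)
  have "R1 \<noteq> R2" using pl by (simp add: pref_less_def)
  hence sc: "single_crossing R1 R2" using r sub R1 R2 unfolding rich_single_crossing_def by blast
  show "zle (F R1) (F R2)"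
    using mono_core[OF c sc pl] m s R1 R2 by (auto simp: mechanism_def strategy_proof_def)
qed

theorem mainTheorem4:
  fixes D :: "pref set"
  assumes "rich_single_crossing D"
  shows "(\<forall>F. mechanism D F \<and> strategy_proof D F \<longrightarrow> monotone_mech D F) \<and>
         (\<forall>Rlo Rhi F. Rlo \<in> D \<and> Rhi \<in> D \<and> (Rlo = Rhi \<or> pref_less Rlo Rhi) \<and>
            mechanism (pref_interval D Rlo Rhi) F \<and> strategy_proof (pref_interval D Rlo Rhi) F
            \<longrightarrow> monotone_mech (pref_interval D Rlo Rhi) F)"
  using sub_mono[OF assms] by (auto simp: pref_interval_def)

end
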